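(* The forgetful functor $U\colon \mathbf{Lens}\to\mathbf{Cat}$ preserves and reflects monomorphisms: a lens $M$ is a monomorphism in $\mathbf{Lens}$ if and only if its get functor $UM$ is a monomorphism in $\mathbf{Cat}$.
   Context: $\mathbf{Cat}$ is the category of small categories and functors. A lens $F\colon \mathbf{A}\to\mathbf{B}$ between small categories consists of a functor $F\colon\mathbf{A}\to\mathbf{B}$ (the get functor) together with, for each object $A$ of $\mathbf{A}$, a function $\varphi_{F,A}$ from the set of morphisms of $\mathbf{B}$ with domain $FA$ to the set of morphisms of $\mathbf{A}$ with domain $A$ (the put functions), such that: $F(\varphi_{F,A}b)=b$; $\varphi_{F,A}(\mathrm{id}_{FA})=\mathrm{id}_A$; and $\varphi_{F,A}(b'\circ b)=\varphi_{F,A'}(b')\circ\varphi_{F,A}(b)$ whenever $b$ has domain $FA$, $A'$ is the codomain of $\varphi_{F,A}b$, and $b'$ has domain $FA'$. $\mathbf{Lens}$ is the category of small categories and lenses; the composite of $F\colon\mathbf{A}\to\mathbf{B}$ and $G\colon\mathbf{B}\to\mathbf{C}$ has get functor $G\circ F$ and put functions $\varphi_{G\circ F,A}(c)=\varphi_{F,A}(\varphi_{G,FA}(c))$. $U\colon\mathbf{Lens}\to\mathbf{Cat}$ is the identity-on-objects functor sending a lens to its get functor. *)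

theory Defs
  imports Main
begin

text \<open>A small category with objects drawn from type 'o and morphisms from type 'a.
  Comp g f denotes the composite g after f (defined when Cod f = Dom g).\<close>

record ('o, 'a) cat =
  Obj  :: "'o set"
  Arr  :: "'a set"
  Dom  :: "'a \<Rightarrow> 'o"
  Cod  :: "'a \<Rightarrow> 'o"
  Id   :: "'o \<Rightarrow> 'a"
  Comp :: "'a \<Rightarrow> 'a \<Rightarrow> 'a"

definition is_cat :: "('o, 'a) cat \<Rightarrow> bool" where
  "is_cat C \<longleftrightarrow>
     (\<forall>f\<in>Arr C. Dom C f \<in> Obj C \<and> Cod C f \<in> Obj C) \<and>
     (\<forall>x\<in>Obj C. Id C x \<in> Arr C \<and> Dom C (Id C x) = x \<and> Cod C (Id C x) = x) \<and>
     (\<forall>f\<in>Arr C. \<forall>g\<in>Arr C. Cod C f = Dom C g \<longrightarrow>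
        Comp C g f \<in> Arr C \<and> Dom C (Comp C g f) = Dom C f \<and> Cod C (Comp C g f) = Cod C g) \<and>
     (\<forall>f\<in>Arr C. Comp C f (Id C (Dom C f)) = f \<and> Comp C (Id C (Cod C f)) f = f) \<and>
     (\<forall>f\<in>Arr C. \<forall>g\<in>Arr C. \<forall>h\<in>Arr C. Cod C f = Dom C g \<longrightarrow> Cod C g = Dom C h \<longrightarrow>
        Comp C h (Comp C g f) = Comp C (Comp C h g) f)"

record ('o, 'a, 'p, 'b) ftor =
  fobj :: "'o \<Rightarrow> 'p"
  farr :: "'a \<Rightarrow> 'b"

definition is_functor :: "('o, 'a) cat \<Rightarrow> ('p, 'b) cat \<Rightarrow> ('o, 'a, 'p, 'b) ftor \<Rightarrow> bool" where
  "is_functor C D F \<longleftrightarrow>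
     (\<forall>x\<in>Obj C. fobj F x \<in> Obj D) \<and>
     (\<forall>f\<in>Arr C. farr F f \<in> Arr D \<and> Dom D (farr F f) = fobj F (Dom C f)
                                   \<and> Cod D (farr F f) = fobj F (Cod C f)) \<and>
     (\<forall>x\<in>Obj C. farr F (Id C x) = Id D (fobj F x)) \<and>
     (\<forall>f\<in>Arr C. \<forall>g\<in>Arr C. Cod C f = Dom C g \<longrightarrow>
        farr F (Comp C g f) = Comp D (farr F g) (farr F f))"

text \<open>Functors are identified when they agree on the objects and morphisms of their domain.\<close>
definition ftor_eq :: "('o, 'a) cat \<Rightarrow> ('o, 'a, 'p, 'b) ftor \<Rightarrow> ('o, 'a, 'p, 'b) ftor \<Rightarrow> bool" where
  "ftor_eq C F G \<longleftrightarrow> (\<forall>x\<in>Obj C. fobj F x = fobj G x) \<and> (\<forall>f\<in>Arr C. farr F f = farr G f)"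

definition ftor_comp :: "('p, 'b, 'q, 'c) ftor \<Rightarrow> ('o, 'a, 'p, 'b) ftor \<Rightarrow> ('o, 'a, 'q, 'c) ftor" where
  "ftor_comp G F = \<lparr>fobj = fobj G \<circ> fobj F, farr = farr G \<circ> farr F\<rparr>"

text \<open>A lens: a get functor together with put functions; lput L x b is the lift of the
  morphism b (with domain F x) to a morphism with domain x.\<close>

record ('o, 'a, 'p, 'b) lens =
  lget :: "('o, 'a, 'p, 'b) ftor"
  lput :: "'o \<Rightarrow> 'b \<Rightarrow> 'a"

definition is_lens :: "('o, 'a) cat \<Rightarrow> ('p, 'b) cat \<Rightarrow> ('o, 'a, 'p, 'b) lens \<Rightarrow> bool" where
  "is_lens A B L \<longleftrightarrow>
     is_functor A B (lget L) \<and>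
     (\<forall>x\<in>Obj A. \<forall>b\<in>Arr B. Dom B b = fobj (lget L) x \<longrightarrow>
        lput L x b \<in> Arr A \<and> Dom A (lput L x b) = x \<and> farr (lget L) (lput L x b) = b) \<and>
     (\<forall>x\<in>Obj A. lput L x (Id B (fobj (lget L) x)) = Id A x) \<and>
     (\<forall>x\<in>Obj A. \<forall>b\<in>Arr B. \<forall>b'\<in>Arr B.
        Dom B b = fobj (lget L) x \<longrightarrow> Cod B b = Dom B b' \<longrightarrow>
        lput L x (Comp B b' b) = Comp A (lput L (Cod A (lput L x b)) b') (lput L x b))"

definition lens_eq :: "('o, 'a) cat \<Rightarrow> ('p, 'b) cat \<Rightarrow> ('o, 'a, 'p, 'b) lens \<Rightarrow> ('o, 'a, 'p, 'b) lens \<Rightarrow> bool" where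
  "lens_eq A B L L' \<longleftrightarrow> ftor_eq A (lget L) (lget L') \<and>
     (\<forall>x\<in>Obj A. \<forall>b\<in>Arr B. Dom B b = fobj (lget L) x \<longrightarrow> lput L x b = lput L' x b)"

definition lens_comp :: "('p, 'b, 'q, 'c) lens \<Rightarrow> ('o, 'a, 'p, 'b) lens \<Rightarrow> ('o, 'a, 'q, 'c) lens" where
  "lens_comp G F = \<lparr>lget = ftor_comp (lget G) (lget F),
                    lput = (\<lambda>x c. lput F x (lput G (fobj (lget F) x) c))\<rparr>"

section \<open>Monomorphisms, tested against small categories in a universe of types 'x, 'y\<close>

definition mono_Cat :: "('o, 'a) cat \<Rightarrow> ('p, 'b) cat \<Rightarrow> ('o, 'a, 'p, 'b) ftor
                         \<Rightarrow> 'x itself \<Rightarrow> 'y itself \<Rightarrow> bool" where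
  "mono_Cat A B M _ _ \<longleftrightarrow>
     (\<forall>(X :: ('x, 'y) cat) F G. is_cat X \<and> is_functor X A F \<and> is_functor X A G \<and>
        ftor_eq X (ftor_comp M F) (ftor_comp M G) \<longrightarrow> ftor_eq X F G)"

definition mono_Lens :: "('o, 'a) cat \<Rightarrow> ('p, 'b) cat \<Rightarrow> ('o, 'a, 'p, 'b) lens
                         \<Rightarrow> 'x itself \<Rightarrow> 'y itself \<Rightarrow> bool" where
  "mono_Lens A B M _ _ \<longleftrightarrow>
     (\<forall>(X :: ('x, 'y) cat) F G. is_cat X \<and> is_lens X A F \<and> is_lens X A G \<and>
        lens_eq X B (lens_comp M F) (lens_comp M G) \<longrightarrow> lens_eq X A F G)"

end

theory Submission
  imports Defs
begin

definition kp :: "('o,'a) cat \<Rightarrow> ('o,'a,'p,'b) lens \<Rightarrow> ('o \<times> 'o, 'a \<times> 'a) cat" where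
"kp A M = \<lparr>Obj = {(x,y). x\<in>Obj A \<and> y\<in>Obj A \<and> fobj (lget M) x = fobj (lget M) y},
 Arr = {(f,g). f\<in>Arr A \<and> g\<in>Arr A \<and> farr (lget M) f = farr (lget M) g},
 Dom = \<lambda>(f,g). (Dom A f, Dom A g), Cod = \<lambda>(f,g). (Cod A f, Cod A g),
 Id = \<lambda>(x,y). (Id A x, Id A y), Comp = \<lambda>(f',g') (f,g). (Comp A f' f, Comp A g' g)\<rparr>"

definition p1 :: "('o,'a,'p,'b) lens \<Rightarrow> ('o \<times> 'o, 'a \<times> 'a, 'o, 'a) lens" where
"p1 M = \<lparr>lget = \<lparr>fobj = fst, farr = fst\<rparr>, lput = \<lambda>(x,y) a. (a, lput M y (farr (lget M) a))\<rparr>"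

definition p2 :: "('o,'a,'p,'b) lens \<Rightarrow> ('o \<times> 'o, 'a \<times> 'a, 'o, 'a) lens" where
"p2 M = \<lparr>lget = \<lparr>fobj = snd, farr = snd\<rparr>, lput = \<lambda>(x,y) b. (lput M x (farr (lget M) b), b)\<rparr>"

lemma kp_cat: assumes "is_cat A" "is_lens A B M" shows "is_cat (kp A M)"
  using assms unfolding is_cat_def is_lens_def is_functor_def kp_def
  by (auto; metis)


lemma p1_lens: assumes "is_cat A" "is_cat B" "is_lens A B M" shows "is_lens (kp A M) A (p1 M)"
proof -
  note M = assms(3)[unfolded is_lens_def is_functor_def]
  show ?thesis
  unfolding is_lens_def is_functor_def kp_def p1_def
  apply (intro conjI)
  using M apply auto[4]
  using M apply auto[1]
  using M apply auto[1]
  subgoal using M assms(1,2) unfolding is_cat_def by auto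
  done
qed

lemma p2_lens: assumes "is_cat A" "is_cat B" "is_lens A B M" shows "is_lens (kp A M) A (p2 M)"
proof -
  note M = assms(3)[unfolded is_lens_def is_functor_def]
  show ?thesis
  unfolding is_lens_def is_functor_def kp_def p2_def
  apply (intro conjI)
  using M apply auto[4]
  using M apply auto[1]
  using M apply auto[1]
  subgoal using M assms(1,2) unfolding is_cat_def by auto
  done
qed

lemma p12_eq: assumes "is_cat A" "is_cat B" "is_lens A B M"
  shows "lens_eq (kp A M) B (lens_comp M (p1 M)) (lens_comp M (p2 M))"
  using assms(3) unfolding is_lens_def is_functor_def kp_def p1_def p2_def lens_eq_def
     lens_comp_def ftor_comp_def ftor_eq_def by auto

lemma p12_inj: assumes "ftor_eq (kp A M) (lget (p1 M)) (lget (p2 M))"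
  shows "\<forall>x\<in>Obj A. \<forall>y\<in>Obj A. fobj (lget M) x = fobj (lget M) y \<longrightarrow> x = y"
    "\<forall>f\<in>Arr A. \<forall>g\<in>Arr A. farr (lget M) f = farr (lget M) g \<longrightarrow> f = g"
  using assms unfolding kp_def p1_def p2_def ftor_eq_def by auto

definition tc :: "('o \<Rightarrow> 'x) \<Rightarrow> ('a \<Rightarrow> 'y) \<Rightarrow> ('o,'a) cat \<Rightarrow> ('x,'y) cat" where
"tc i j C = \<lparr>Obj = i ` Obj C, Arr = j ` Arr C, Dom = i \<circ> Dom C \<circ> inv j, Cod = i \<circ> Cod C \<circ> inv j,
   Id = j \<circ> Id C \<circ> inv i, Comp = \<lambda>u v. j (Comp C (inv j u) (inv j v))\<rparr>"

definition tlen :: "('o \<Rightarrow> 'x) \<Rightarrow> ('a \<Rightarrow> 'y) \<Rightarrow> ('o,'a,'p,'b) lens \<Rightarrow> ('x,'y,'p,'b) lens" where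
"tlen i j L = \<lparr>lget = \<lparr>fobj = fobj (lget L) \<circ> inv i, farr = farr (lget L) \<circ> inv j\<rparr>,
   lput = \<lambda>w b. j (lput L (inv i w) b)\<rparr>"

lemma tc_cat: assumes "inj i" "inj j" "is_cat C" shows "is_cat (tc i j C)"
  using assms(3) unfolding is_cat_def tc_def by (auto simp: inv_f_f[OF assms(1)] inv_f_f[OF assms(2)] inj_eq[OF assms(1)] inj_eq[OF assms(2)])

lemma tlen_lens: assumes "inj i" "inj j" "is_lens C A L" shows "is_lens (tc i j C) A (tlen i j L)"
  using assms(3) unfolding is_lens_def is_functor_def tc_def tlen_def
  by (auto simp: inv_f_f[OF assms(1)] inv_f_f[OF assms(2)] inj_eq[OF assms(1)] inj_eq[OF assms(2)])

lemma tlen_eq: assumes "inj i" "inj j" "lens_eq C B (lens_comp M L1) (lens_comp M L2)"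
  shows "lens_eq (tc i j C) B (lens_comp M (tlen i j L1)) (lens_comp M (tlen i j L2))"
  using assms(3) unfolding lens_eq_def ftor_eq_def lens_comp_def ftor_comp_def tc_def tlen_def
  by (auto simp: inv_f_f[OF assms(1)] inv_f_f[OF assms(2)] inj_eq[OF assms(1)] inj_eq[OF assms(2)])

lemma tlen_back: assumes "inj i" "inj j" "ftor_eq (tc i j C) (lget (tlen i j L1)) (lget (tlen i j L2))"
  shows "ftor_eq C (lget L1) (lget L2)"
  using assms(3) unfolding ftor_eq_def tc_def tlen_def
  by (auto simp: inv_f_f[OF assms(1)] inv_f_f[OF assms(2)] inj_eq[OF assms(1)] inj_eq[OF assms(2)])

lemma inj_to_cat:
  assumes "is_functor A B Mg"
    and io: "\<forall>x\<in>Obj A. \<forall>y\<in>Obj A. fobj Mg x = fobj Mg y \<longrightarrow> x = y"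
    and ia: "\<forall>f\<in>Arr A. \<forall>g\<in>Arr A. farr Mg f = farr Mg g \<longrightarrow> f = g"
  shows "mono_Cat A B Mg TYPE('x) TYPE('y)"
  unfolding mono_Cat_def
proof (intro allI impI, elim conjE)
  fix X :: "('x,'y) cat" and F G
  assume X: "is_cat X" and F: "is_functor X A F" and G: "is_functor X A G" and e: "ftor_eq X (ftor_comp Mg F) (ftor_comp Mg G)"
  show "ftor_eq X F G" using F G e io ia unfolding ftor_eq_def is_functor_def ftor_comp_def
    by (metis comp_apply ftor.select_convs(1) ftor.select_convs(2))
qed

lemma inj_to_lens:
  assumes "is_lens A B M"
    and io: "\<forall>x\<in>Obj A. \<forall>y\<in>Obj A. fobj (lget M) x = fobj (lget M) y \<longrightarrow> x = y"
    and ia: "\<forall>f\<in>Arr A. \<forall>g\<in>Arr A. farr (lget M) f = farr (lget M) g \<longrightarrow> f = g"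
  shows "mono_Lens A B M TYPE('x) TYPE('y)"
  unfolding mono_Lens_def
proof (intro allI impI, elim conjE)
  fix X :: "('x,'y) cat" and F G
  assume X: "is_cat X" and F: "is_lens X A F" and G: "is_lens X A G" and e: "lens_eq X B (lens_comp M F) (lens_comp M G)"
  have Mf: "is_functor A B (lget M)" using assms(1) unfolding is_lens_def by blast
  have Ff: "is_functor X A (lget F)" using F unfolding is_lens_def by blast
  have Gf: "is_functor X A (lget G)" using G unfolding is_lens_def by blast
  have fe: "ftor_eq X (lget F) (lget G)"
  proof -
    have e1: "ftor_eq X (ftor_comp (lget M) (lget F)) (ftor_comp (lget M) (lget G))"
      using e unfolding lens_eq_def lens_comp_def by simp
    show ?thesis using inj_to_cat[OF Mf io ia, where 'x='x and 'y='y] Ff Gf e1 X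
      unfolding mono_Cat_def by blast
  qed
  show "lens_eq X A F G" unfolding lens_eq_def
  proof (intro conjI fe ballI impI)
    fix x b assume x: "x \<in> Obj X" and b: "b \<in> Arr A" and d: "Dom A b = fobj (lget F) x"
    have fx: "fobj (lget F) x \<in> Obj A" using Ff x unfolding is_functor_def by blast
    have gx: "fobj (lget G) x = fobj (lget F) x" using fe x unfolding ftor_eq_def by simp
    define c where "c = farr (lget M) b"
    have c: "c \<in> Arr B" "Dom B c = fobj (lget M) (fobj (lget F) x)"
      using Mf b d unfolding c_def is_functor_def by auto
    have pb: "lput M (fobj (lget F) x) c = b"
    proof -
      have "lput M (fobj (lget F) x) c \<in> Arr A" "farr (lget M) (lput M (fobj (lget F) x) c) = c"
        using assms(1) fx c unfolding is_lens_def by auto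
      then show ?thesis using ia b unfolding c_def by blast
    qed
    have "lput (lens_comp M F) x c = lput (lens_comp M G) x c"
      using e x c unfolding lens_eq_def by (simp add: lens_comp_def ftor_comp_def)
    then show "lput F x b = lput G x b" using pb gx by (simp add: lens_comp_def)
  qed
qed

theorem theorem3p1:
  fixes A :: "('o, 'a) cat" and B :: "('p, 'b) cat" and M :: "('o, 'a, 'p, 'b) lens"
  assumes "is_cat A" and "is_cat B" and "is_lens A B M"
    and "\<exists>i :: 'o \<times> 'o \<Rightarrow> 'x. inj i" and "\<exists>j :: 'a \<times> 'a \<Rightarrow> 'y. inj j"
  shows "mono_Lens A B M TYPE('x) TYPE('y) \<longleftrightarrow> mono_Cat A B (lget M) TYPE('x) TYPE('y)"
proof -
  obtain i :: "'o \<times> 'o \<Rightarrow> 'x" where i: "inj i" using assms(4) by blast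
  obtain j :: "'a \<times> 'a \<Rightarrow> 'y" where j: "inj j" using assms(5) by blast
  define K where "K = tc i j (kp A M)"
  define Q1 where "Q1 = tlen i j (p1 M)"
  define Q2 where "Q2 = tlen i j (p2 M)"
  have K: "is_cat K" unfolding K_def by (rule tc_cat[OF i j kp_cat[OF assms(1,3)]])
  have Q1: "is_lens K A Q1" unfolding K_def Q1_def by (rule tlen_lens[OF i j p1_lens[OF assms(1,2,3)]])
  have Q2: "is_lens K A Q2" unfolding K_def Q2_def by (rule tlen_lens[OF i j p2_lens[OF assms(1,2,3)]])
  have Qe: "lens_eq K B (lens_comp M Q1) (lens_comp M Q2)" unfolding K_def Q1_def Q2_def
    by (rule tlen_eq[OF i j p12_eq[OF assms(1,2,3)]])
  have Mf: "is_functor A B (lget M)" using assms(3) unfolding is_lens_def by blast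
  have bk: "ftor_eq K (lget Q1) (lget Q2) \<Longrightarrow>
     (\<forall>x\<in>Obj A. \<forall>y\<in>Obj A. fobj (lget M) x = fobj (lget M) y \<longrightarrow> x = y) \<and>
     (\<forall>f\<in>Arr A. \<forall>g\<in>Arr A. farr (lget M) f = farr (lget M) g \<longrightarrow> f = g)"
    unfolding K_def Q1_def Q2_def using p12_inj tlen_back[OF i j] by metis
  show ?thesis
  proof
    assume "mono_Lens A B M TYPE('x) TYPE('y)"
    then have "lens_eq K A Q1 Q2" using K Q1 Q2 Qe unfolding mono_Lens_def by blast
    then have "ftor_eq K (lget Q1) (lget Q2)" unfolding lens_eq_def by blast
    then show "mono_Cat A B (lget M) TYPE('x) TYPE('y)" using bk inj_to_cat[OF Mf] by blast
  next
    assume "mono_Cat A B (lget M) TYPE('x) TYPE('y)"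
    moreover have "is_functor K A (lget Q1)" "is_functor K A (lget Q2)"
      using Q1 Q2 unfolding is_lens_def by blast+
    moreover have "ftor_eq K (ftor_comp (lget M) (lget Q1)) (ftor_comp (lget M) (lget Q2))"
      using Qe unfolding lens_eq_def lens_comp_def by simp
    ultimately have "ftor_eq K (lget Q1) (lget Q2)" using K unfolding mono_Cat_def by blast
    then show "mono_Lens A B M TYPE('x) TYPE('y)" using bk inj_to_lens[OF assms(3)] by blast
  qed
qed

end
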